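(* Let $V$ be a real-valued function on the set of all games (as defined in the context) that satisfies Constancy, Dominance, Additivity, Continuity and Indifference. Let $G=(\mathbf{c},\mathbf{r})$ be a game with $n$ outcomes such that $c_i=c_1$ for all $i=1,\dots,n$. Then \[ V(G)=\frac1n\sum_{i=1}^n r_i. \]
   Context: A game with $n$ outcomes ($n\ge1$) is a pair $G=(\mathbf{c},\mathbf{r})$ with $\mathbf{c}\in\mathbb{C}^n$ and $\mathbf{r}\in\mathbb{R}^n$; $V$ assigns a real number to each game. Axioms: Constancy: if $r_i=r_1$ for all $i$, then $V(\mathbf{c},\mathbf{r})=r_1$. Dominance: if $\mathbf{r}\ge\mathbf{r}'$ componentwise, then $V(\mathbf{c},\mathbf{r})\ge V(\mathbf{c},\mathbf{r}')$. Additivity: $V(\mathbf{c},\mathbf{r}+\mathbf{r}')=V(\mathbf{c},\mathbf{r})+V(\mathbf{c},\mathbf{r}')$. Continuity: if games $G_k$ with $n$ outcomes converge to a game $G$ with $n$ outcomes in the metric induced by $\|(\mathbf{c},\mathbf{r})\|:=\|\mathbf{c}\|_3+\|\mathbf{r}\|_1$, then $V(G)=\lim_k V(G_k)$. Indifference: for every permutation $\sigma$ of $\{1,\dots,n\}$, $V(\sigma(\mathbf{c}),\sigma(\mathbf{r}))=V(\mathbf{c},\mathbf{r})$, where $\sigma$ acts on vectors by permuting their components, $(\sigma(\mathbf{v}))_i=v_{\sigma(i)}$. *)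

theory Defs
  imports "HOL-Analysis.Analysis" "HOL-Combinatorics.Permutations"
begin

text \<open>A game with n outcomes (n \<ge> 1) is represented by a pair of lists (c, r) of
  equal length n; outcomes are indexed 0..n-1.  V is a real-valued function on such
  pairs; its values on ill-formed pairs are irrelevant.\<close>

definition is_game :: "complex list \<Rightarrow> real list \<Rightarrow> bool" where
  "is_game c r \<longleftrightarrow> length c = length r \<and> length r \<ge> 1"

definition norm3 :: "complex list \<Rightarrow> real" where
  "norm3 c = (\<Sum>i<length c. cmod (c ! i) ^ 3) powr (1/3)"

definition norm1 :: "real list \<Rightarrow> real" where
  "norm1 r = (\<Sum>i<length r. \<bar>r ! i\<bar>)"

definition game_dist :: "complex list \<Rightarrow> real list \<Rightarrow> complex list \<Rightarrow> real list \<Rightarrow> real" where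
  "game_dist c r c' r' = norm3 (map2 (-) c c') + norm1 (map2 (-) r r')"

definition constancy :: "(complex list \<Rightarrow> real list \<Rightarrow> real) \<Rightarrow> bool" where
  "constancy V \<longleftrightarrow> (\<forall>c r. is_game c r \<and> (\<forall>i<length r. r ! i = r ! 0) \<longrightarrow> V c r = r ! 0)"

definition dominance :: "(complex list \<Rightarrow> real list \<Rightarrow> real) \<Rightarrow> bool" where
  "dominance V \<longleftrightarrow> (\<forall>c r r'. is_game c r \<and> is_game c r' \<and> (\<forall>i<length r. r ! i \<ge> r' ! i)
      \<longrightarrow> V c r \<ge> V c r')"

definition additivity :: "(complex list \<Rightarrow> real list \<Rightarrow> real) \<Rightarrow> bool" where
  "additivity V \<longleftrightarrow> (\<forall>c r r'. is_game c r \<and> is_game c r'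
      \<longrightarrow> V c (map2 (+) r r') = V c r + V c r')"

definition continuity :: "(complex list \<Rightarrow> real list \<Rightarrow> real) \<Rightarrow> bool" where
  "continuity V \<longleftrightarrow> (\<forall>C R c r. is_game c r \<and> (\<forall>k. is_game (C k) (R k) \<and> length (R k) = length r)
      \<and> (\<lambda>k. game_dist (C k) (R k) c r) \<longlonglongrightarrow> 0
      \<longrightarrow> (\<lambda>k. V (C k) (R k)) \<longlonglongrightarrow> V c r)"

definition indifference :: "(complex list \<Rightarrow> real list \<Rightarrow> real) \<Rightarrow> bool" where
  "indifference V \<longleftrightarrow> (\<forall>c r \<sigma>. is_game c r \<and> \<sigma> permutes {..<length r}
      \<longrightarrow> V (permute_list \<sigma> c) (permute_list \<sigma> r) = V c r)"

end

theory Submission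
  imports Defs
begin

lemma mod_undo: "x < (n::nat) \<Longrightarrow> ((i+x) mod n + (n - i mod n)) mod n = x"
proof -
  assume x: "x < n"
  have "i mod n < n" using x by simp
  have e: "i div n * n + i mod n = i" by (rule div_mult_mod_eq)
  have "((i+x) mod n + (n - i mod n)) mod n = (i + x + (n - i mod n)) mod n" by (simp add: mod_add_left_eq)
  also have "i + x + (n - i mod n) = x + i div n * n + n"
    using \<open>i mod n < n\<close> e by linarith
  also have "(x + i div n * n + n) mod n = x" using x by simp
  finally show ?thesis .
qed

lemma rot_bij:
  assumes "i < (n::nat)"
  shows "bij_betw (\<lambda>k. (i + k) mod n) {..<n} {..<n}"
proof -
  have "inj_on (\<lambda>k. (i + k) mod n) {..<n}"
  proof (rule inj_onI)
    fix x y assume x: "x \<in> {..<n}" and y: "y \<in> {..<n}" and e: "(i + x) mod n = (i + y) mod n"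
    thus "x = y" using mod_undo[of x n i] mod_undo[of y n i] x y by simp
  qed
  moreover have "(\<lambda>k. (i + k) mod n) ` {..<n} \<subseteq> {..<n}" using assms by auto
  ultimately show ?thesis
    by (simp add: bij_betw_def endo_inj_surj)
qed

lemma rot_permutes:
  assumes "0 < (n::nat)"
  shows "(\<lambda>i. if i < n then (i + k) mod n else i) permutes {..<n}"
proof -
  have "bij_betw (\<lambda>k'. (k mod n + k') mod n) {..<n} {..<n}"
    using rot_bij[of "k mod n" n] assms by simp
  moreover have "\<And>x. x < n \<Longrightarrow> (k mod n + x) mod n = (x + k) mod n"
    by (subst mod_add_left_eq) (simp add: add.commute)
  ultimately have "bij_betw (\<lambda>i. if i < n then (i + k) mod n else i) {..<n} {..<n}"
    by (subst bij_betw_cong[where g="\<lambda>k'. (k mod n + k') mod n"]) auto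
  thus ?thesis by (intro bij_imp_permutes) auto
qed

theorem lemma2:
  fixes V :: "complex list \<Rightarrow> real list \<Rightarrow> real"
    and c :: "complex list" and r :: "real list"
  assumes "constancy V" and "dominance V" and "additivity V"
    and "continuity V" and "indifference V"
    and "is_game c r"
    and "\<forall>i<length c. c ! i = c ! 0"
  shows "V c r = (\<Sum>i<length r. r ! i) / real (length r)"
proof -
  define n where "n = length r"
  have n0: "0 < n" using assms(6) unfolding is_game_def n_def by linarith
  have lc: "length c = n" using assms(6) by (simp add: is_game_def n_def)
  define rot where "rot m = map (\<lambda>i. r ! ((i + m) mod n)) [0..<n]" for m
  define rs where "rs m = map (\<lambda>i. \<Sum>k<m. r ! ((i + k) mod n)) [0..<n]" for m
  have Vrot: "V c (rot m) = V c r" for m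
  proof -
    define \<sigma> where "\<sigma> = (\<lambda>i. if i < n then (i + m) mod n else i)"
    have p: "\<sigma> permutes {..<length r}" using rot_permutes[OF n0] by (simp add: \<sigma>_def n_def)
    have pc: "permute_list \<sigma> c = c"
    proof (rule nth_equalityI)
      show "length (permute_list \<sigma> c) = length c" by simp
      fix i assume "i < length (permute_list \<sigma> c)"
      hence i: "i < n" using lc by simp
      have "(i + m) mod n < n" using n0 by simp
      hence "c ! ((i + m) mod n) = c ! 0" using lc assms(7)[rule_format, of "(i + m) mod n"] by argo
      moreover have "c ! i = c ! 0" using i lc assms(7)[rule_format, of i] by argo
      ultimately show "permute_list \<sigma> c ! i = c ! i"
        using i lc by (simp add: permute_list_def \<sigma>_def)
    qed
    have pr: "permute_list \<sigma> r = rot m"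
      by (rule nth_equalityI) (auto simp: permute_list_def rot_def \<sigma>_def n_def)
    have "V (permute_list \<sigma> c) (permute_list \<sigma> r) = V c r"
      using assms(5) assms(6) p unfolding indifference_def by blast
    thus ?thesis using pc pr by simp
  qed
  have ind: "V c (rs m) = real m * V c r" for m
  proof (induction m)
    case 0
    have "is_game c (rs 0)" using lc n0 by (simp add: is_game_def rs_def)
    hence "V c (rs 0) = rs 0 ! 0" using assms(1) unfolding constancy_def
      by (auto simp: rs_def)
    thus ?case using n0 by (simp add: rs_def)
  next
    case (Suc m)
    have "rs (Suc m) = map2 (+) (rs m) (rot m)"
      by (rule nth_equalityI) (auto simp: rs_def rot_def)
    moreover have "is_game c (rs m)" "is_game c (rot m)" using lc n0
      by (auto simp: is_game_def rs_def rot_def)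
    ultimately have "V c (rs (Suc m)) = V c (rs m) + V c (rot m)"
      using assms(3) unfolding additivity_def by auto
    thus ?case using Suc Vrot by (simp add: algebra_simps)
  qed
  have S: "(\<Sum>k<n. r ! ((i + k) mod n)) = (\<Sum>j<n. r ! j)" if "i < n" for i
    using sum.reindex_bij_betw[OF rot_bij[OF that], of "\<lambda>j. r ! j"] by simp
  have "is_game c (rs n)" using lc n0 by (simp add: is_game_def rs_def)
  moreover have "\<forall>i<length (rs n). rs n ! i = rs n ! 0" using S n0 by (simp add: rs_def)
  ultimately have "V c (rs n) = rs n ! 0" using assms(1) unfolding constancy_def by blast
  also have "\<dots> = (\<Sum>j<n. r ! j)" using S n0 by (simp add: rs_def)
  finally have "real n * V c r = (\<Sum>j<n. r ! j)" using ind by simp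
  thus ?thesis using n0 by (simp add: n_def field_simps)
qed

end
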